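(* Let $F$ be any surface (including $\mathbb{RP}^2$), and let $D_p$ be a link diagram in $F$ with a crossing $p$; let $D_0$ (resp. $D_\infty$) be the diagram obtained from $D_p$ by the $(+1)$-smoothing (resp. $(-1)$-smoothing) of $p$. Order the crossings of $D_0$ and $D_\infty$ by the order inherited from $D_p$. Let $\alpha_0:C_{ijs}(D_\infty)\to C_{i-1,j-1,s}(D_p)$ send an enhanced state of $D_\infty$ to the enhanced state of $D_p$ with the same markers at the other crossings, marker $-1$ at $p$, and the same circle labels; let $\alpha(S)=(-1)^{t'(S)}\alpha_0(S)$, where $t'(S)$ is the number of $-1$ markers of $S$ at crossings preceding $p$. Let $\beta:C_{ijs}(D_p)\to C_{i-1,j-1,s}(D_0)$ send an enhanced state with marker $+1$ at $p$ to the corresponding enhanced state of $D_0$ (same other markers and labels) and an enhanced state with marker $-1$ at $p$ to $0$. Then (1) $\alpha$ and $\beta$ are chain maps (commute with the differentials $d$), and (2) the sequence $0\to C(D_\infty)\xrightarrow{\alpha}C(D_p)\xrightarrow{\beta}C(D_0)\to 0$ is exact.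
   Context: Let $F$ be a surface (possibly non-orientable). A link diagram in $F$ is a finite collection of closed curves generically immersed in $F$ with finitely many transverse double points (crossings) with over/under information. For a crossing, its $(+1)$-smoothing (resp. $(-1)$-smoothing) is the smoothing with coefficient $A$ (resp. $A^{-1}$) in the Kauffman bracket relation $L_p=AL_0+A^{-1}L_\infty$. A Kauffman state assigns a marker $\pm1$ to each crossing; smoothing accordingly yields disjoint circles. An enhanced state additionally labels each circle $+$ or $-$. A circle is trivial if it bounds a disk in $F$, bounding if it bounds a disk or a Möbius band. $\mathcal C(F)$ is the set of unoriented unbounding simple closed curves in $F$ up to homotopy. For an enhanced state $S$: $I(S)=\#\{+1\text{ markers}\}-\#\{-1\text{ markers}\}$, $\tau(S)=\#\{\text{trivial circles labeled }+\}-\#\{\text{trivial circles labeled }-\}$, $J(S)=I(S)+2\tau(S)$, $\Psi(S)=\sum_k\varepsilon_k\gamma_k\in\mathbb Z\mathcal C(F)$ over unbounding circles $\gamma_k$ with labels $\varepsilon_k$. $C_{ijs}(D)$ is the free abelian group on enhanced states with $(I,J,\Psi)=(i,j,s)$, and $C(D)=\bigoplus C_{ijs}(D)$. For a total order of crossings: $[S:S']_v=1$ iff (a) $v$ has marker $+1$ in $S$, $-1$ in $S'$, (b) other markers agree, (c) circles common to $S,S'$ have equal labels, (d) $J(S)=J(S')$, $\Psi(S)=\Psi(S')$; else $0$. $d_v(S)=\sum_{S'}[S:S']_vS'$, $t(S,v)$ = number of $-1$ markers of $S$ at crossings greater than $v$, $d(S)=\sum_v(-1)^{t(S,v)}d_v(S)$.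 *)

theory Defs
  imports "HOL-Analysis.Analysis"
begin

definition surface :: "'a topology \<Rightarrow> bool" where
  "surface F \<longleftrightarrow> Hausdorff_space F \<and> second_countable F \<and>
     (\<forall>x\<in>topspace F. \<exists>U. openin F U \<and> x \<in> U \<and>
        (\<exists>V::complex set. open V \<and> subtopology F U homeomorphic_space top_of_set V))"

definition scc :: "'a topology \<Rightarrow> 'a set \<Rightarrow> bool" where
  "scc F C \<longleftrightarrow> C \<subseteq> topspace F \<and>
     subtopology F C homeomorphic_space top_of_set (sphere (0::complex) 1)"

definition trivial_curve :: "'a topology \<Rightarrow> 'a set \<Rightarrow> bool" where
  "trivial_curve F C \<longleftrightarrow> (\<exists>D h. D \<subseteq> topspace F \<and>
     homeomorphic_map (top_of_set (cball (0::complex) 1)) (subtopology F D) h \<and>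
     h ` sphere 0 1 = C)"

definition mobius_pt :: "real \<Rightarrow> real \<Rightarrow> real \<times> real \<times> real" where
  "mobius_pt \<theta> t = ((1 + t / 2 * cos (\<theta> / 2)) * cos \<theta>,
                     (1 + t / 2 * cos (\<theta> / 2)) * sin \<theta>,
                     t / 2 * sin (\<theta> / 2))"

definition mobius_band :: "(real \<times> real \<times> real) set" where
  "mobius_band = {mobius_pt \<theta> t | \<theta> t. 0 \<le> \<theta> \<and> \<theta> \<le> 2 * pi \<and> -1 \<le> t \<and> t \<le> 1}"

definition mobius_boundary :: "(real \<times> real \<times> real) set" where
  "mobius_boundary = {mobius_pt \<theta> t | \<theta> t. 0 \<le> \<theta> \<and> \<theta> \<le> 2 * pi \<and> \<bar>t\<bar> = 1}"

definition bounding_curve :: "'a topology \<Rightarrow> 'a set \<Rightarrow> bool" where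
  "bounding_curve F C \<longleftrightarrow> trivial_curve F C \<or> (\<exists>M h. M \<subseteq> topspace F \<and>
     homeomorphic_map (top_of_set mobius_band) (subtopology F M) h \<and>
     h ` mobius_boundary = C)"

definition param_curve :: "'a topology \<Rightarrow> 'a set \<Rightarrow> (complex \<Rightarrow> 'a) \<Rightarrow> bool" where
  "param_curve F C g \<longleftrightarrow> C \<subseteq> topspace F \<and>
     homeomorphic_map (top_of_set (sphere (0::complex) 1)) (subtopology F C) g"

text \<open>Unoriented free homotopy of simple closed curves (the existential over
  parametrisations covers both orientations).\<close>
definition homotopic_curves :: "'a topology \<Rightarrow> 'a set \<Rightarrow> 'a set \<Rightarrow> bool" where
  "homotopic_curves F C1 C2 \<longleftrightarrow> (\<exists>g1 g2. param_curve F C1 g1 \<and> param_curve F C2 g2 \<and>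
     homotopic_with (\<lambda>_. True) (top_of_set (sphere (0::complex) 1)) F g1 g2)"

definition unbounding :: "'a topology \<Rightarrow> 'a set \<Rightarrow> bool" where
  "unbounding F C \<longleftrightarrow> scc F C \<and> \<not> bounding_curve F C"

text \<open>A link diagram in F with crossing set X (a finite set of naturals; the total
  order on crossings is the order of the naturals) is represented by its Kauffman
  smoothing map: a Kauffman state is a function s :: nat => bool (True = marker +1,
  False = marker -1), normalised to be False outside X, and circ s is the set of
  circles (pairwise disjoint simple closed curves in F) obtained by smoothing
  every crossing according to s.\<close>

definition states :: "nat set \<Rightarrow> (nat \<Rightarrow> bool) set" where
  "states X = {s. \<forall>x. x \<notin> X \<longrightarrow> \<not> s x}"

definition diagram :: "'a topology \<Rightarrow> nat set \<Rightarrow> ((nat \<Rightarrow> bool) \<Rightarrow> 'a set set) \<Rightarrow> bool" where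
  "diagram F X circ \<longleftrightarrow> finite X \<and>
     (\<forall>s\<in>states X. finite (circ s) \<and> (\<forall>C\<in>circ s. scc F C) \<and>
        (\<forall>C1\<in>circ s. \<forall>C2\<in>circ s. C1 \<noteq> C2 \<longrightarrow> C1 \<inter> C2 = {}))"

text \<open>The diagrams D_0 and D_infinity obtained from D_p by the (+1)- resp.
  (-1)-smoothing at p: smoothing their crossings yields exactly the circles of
  D_p for the states with marker +1 resp. -1 at p.\<close>
definition smooth0 :: "nat \<Rightarrow> ((nat \<Rightarrow> bool) \<Rightarrow> 'a set set) \<Rightarrow> ((nat \<Rightarrow> bool) \<Rightarrow> 'a set set)" where
  "smooth0 p circ = (\<lambda>s. circ (s(p := True)))"

definition smoothinf :: "nat \<Rightarrow> ((nat \<Rightarrow> bool) \<Rightarrow> 'a set set) \<Rightarrow> ((nat \<Rightarrow> bool) \<Rightarrow> 'a set set)" where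
  "smoothinf p circ = (\<lambda>s. circ (s(p := False)))"

text \<open>An enhanced state is a pair (s, l): a Kauffman state and a labelling of
  its circles (True = +, False = -), the labelling being False off the circles.\<close>
type_synonym 'a enh = "(nat \<Rightarrow> bool) \<times> ('a set \<Rightarrow> bool)"

definition enh_states :: "nat set \<Rightarrow> ((nat \<Rightarrow> bool) \<Rightarrow> 'a set set) \<Rightarrow> 'a enh set" where
  "enh_states X circ = {(s, l). s \<in> states X \<and> (\<forall>C. C \<notin> circ s \<longrightarrow> \<not> l C)}"

definition I_idx :: "nat set \<Rightarrow> 'a enh \<Rightarrow> int" where
  "I_idx X S = int (card {x\<in>X. fst S x}) - int (card {x\<in>X. \<not> fst S x})"

definition tau :: "'a topology \<Rightarrow> ((nat \<Rightarrow> bool) \<Rightarrow> 'a set set) \<Rightarrow> 'a enh \<Rightarrow> int" where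
  "tau F circ S = int (card {C\<in>circ (fst S). trivial_curve F C \<and> snd S C})
                - int (card {C\<in>circ (fst S). trivial_curve F C \<and> \<not> snd S C})"

definition J_idx :: "'a topology \<Rightarrow> nat set \<Rightarrow> ((nat \<Rightarrow> bool) \<Rightarrow> 'a set set) \<Rightarrow> 'a enh \<Rightarrow> int" where
  "J_idx F X circ S = I_idx X S + 2 * tau F circ S"

text \<open>Psi(S) in Z C(F), represented by its coefficient function: the coefficient
  at the class of an unbounding simple closed curve c is the signed number of
  unbounding circles of S homotopic to c; the value is 0 at all other sets.
  Two such functions are equal iff the corresponding elements of Z C(F) are.\<close>
definition Psi :: "'a topology \<Rightarrow> ((nat \<Rightarrow> bool) \<Rightarrow> 'a set set) \<Rightarrow> 'a enh \<Rightarrow> 'a set \<Rightarrow> int" where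
  "Psi F circ S = (\<lambda>c. if unbounding F c then
      (\<Sum>C\<in>{C\<in>circ (fst S). unbounding F C \<and> homotopic_curves F C c}.
          if snd S C then 1 else -1)
     else 0)"

definition incid :: "'a topology \<Rightarrow> nat set \<Rightarrow> ((nat \<Rightarrow> bool) \<Rightarrow> 'a set set) \<Rightarrow> nat \<Rightarrow> 'a enh \<Rightarrow> 'a enh \<Rightarrow> int" where
  "incid F X circ v S S' =
     (if v \<in> X \<and> fst S v \<and> \<not> fst S' v \<and> (\<forall>x. x \<noteq> v \<longrightarrow> fst S x = fst S' x) \<and>
         (\<forall>C\<in>circ (fst S) \<inter> circ (fst S'). snd S C = snd S' C) \<and>
         J_idx F X circ S = J_idx F X circ S' \<and> Psi F circ S = Psi F circ S'
      then 1 else 0)"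

definition t_cnt :: "nat set \<Rightarrow> 'a enh \<Rightarrow> nat \<Rightarrow> nat" where
  "t_cnt X S v = card {x\<in>X. v < x \<and> \<not> fst S x}"

text \<open>Chains: elements of the free abelian group on the enhanced states,
  i.e. integer-valued functions vanishing off the enhanced states.\<close>
definition is_chain :: "nat set \<Rightarrow> ((nat \<Rightarrow> bool) \<Rightarrow> 'a set set) \<Rightarrow> ('a enh \<Rightarrow> int) \<Rightarrow> bool" where
  "is_chain X circ x \<longleftrightarrow> (\<forall>S. S \<notin> enh_states X circ \<longrightarrow> x S = 0)"

definition diff :: "'a topology \<Rightarrow> nat set \<Rightarrow> ((nat \<Rightarrow> bool) \<Rightarrow> 'a set set) \<Rightarrow>
     ('a enh \<Rightarrow> int) \<Rightarrow> ('a enh \<Rightarrow> int)" where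
  "diff F X circ x = (\<lambda>S'. if S' \<in> enh_states X circ then
      (\<Sum>S\<in>enh_states X circ. x S *
         (\<Sum>v\<in>X. (-1) ^ t_cnt X S v * incid F X circ v S S'))
     else 0)"

definition lin_ext :: "'e set \<Rightarrow> ('e \<Rightarrow> 'f) \<Rightarrow> ('e \<Rightarrow> int) \<Rightarrow> ('e \<Rightarrow> int) \<Rightarrow> ('f \<Rightarrow> int)" where
  "lin_ext A f c x = (\<lambda>T. \<Sum>S\<in>A. if f S = T then c S * x S else 0)"

text \<open>alpha_0 and beta on enhanced states: set the marker at p to -1 (for alpha_0
  this is the marker -1 at p in D_p; for beta it is the normalisation of a state
  of D_0, whose crossing set does not contain p), keep everything else.\<close>
definition alpha0 :: "nat \<Rightarrow> 'a enh \<Rightarrow> 'a enh" where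
  "alpha0 p S = ((fst S)(p := False), snd S)"

definition beta0 :: "nat \<Rightarrow> 'a enh \<Rightarrow> 'a enh" where
  "beta0 p S = ((fst S)(p := False), snd S)"

definition t_pre :: "nat set \<Rightarrow> nat \<Rightarrow> 'a enh \<Rightarrow> nat" where
  "t_pre X p S = card {x\<in>X. x < p \<and> \<not> fst S x}"

definition alpha_map :: "nat set \<Rightarrow> ((nat \<Rightarrow> bool) \<Rightarrow> 'a set set) \<Rightarrow> nat \<Rightarrow>
     ('a enh \<Rightarrow> int) \<Rightarrow> ('a enh \<Rightarrow> int)" where
  "alpha_map X circ p = lin_ext (enh_states (X - {p}) (smoothinf p circ)) (alpha0 p)
      (\<lambda>S. (-1) ^ t_pre (X - {p}) p S)"

definition beta_map :: "nat set \<Rightarrow> ((nat \<Rightarrow> bool) \<Rightarrow> 'a set set) \<Rightarrow> nat \<Rightarrow>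
     ('a enh \<Rightarrow> int) \<Rightarrow> ('a enh \<Rightarrow> int)" where
  "beta_map X circ p = lin_ext {S\<in>enh_states X circ. fst S p} (beta0 p) (\<lambda>_. 1)"

end

theory Submission
  imports Defs
begin

definition gam :: "nat \<Rightarrow> 'a enh \<Rightarrow> 'a enh" where
  "gam p T = ((fst T)(p := True), snd T)"

lemma mem_enh: "S \<in> enh_states X circ \<longleftrightarrow> fst S \<in> states X \<and> (\<forall>C. C \<notin> circ (fst S) \<longrightarrow> \<not> snd S C)"
  by (cases S) (auto simp: enh_states_def)

lemma finite_states: "finite X \<Longrightarrow> finite (states X)"
proof -
  assume "finite X"
  have "states X \<subseteq> (\<lambda>A x. x \<in> A) ` Pow X"
  proof
    fix s assume "s \<in> states X"
    then have "s = (\<lambda>x. x \<in> {x\<in>X. s x})" by (auto simp: states_def fun_eq_iff)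
    then show "s \<in> (\<lambda>A x. x \<in> A) ` Pow X" by blast
  qed
  then show ?thesis using \<open>finite X\<close> finite_subset by blast
qed

lemma finite_labels: "finite K \<Longrightarrow> finite {l :: 'b \<Rightarrow> bool. \<forall>C. C \<notin> K \<longrightarrow> \<not> l C}"
proof -
  assume "finite K"
  have "{l :: 'b \<Rightarrow> bool. \<forall>C. C \<notin> K \<longrightarrow> \<not> l C} \<subseteq> (\<lambda>A x. x \<in> A) ` Pow K"
  proof
    fix l :: "'b \<Rightarrow> bool" assume "l \<in> {l. \<forall>C. C \<notin> K \<longrightarrow> \<not> l C}"
    then have "l = (\<lambda>x. x \<in> {x\<in>K. l x})" by (auto simp: fun_eq_iff)
    then show "l \<in> (\<lambda>A x. x \<in> A) ` Pow K" by blast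
  qed
  then show ?thesis using \<open>finite K\<close> finite_subset by blast
qed

lemma finite_enh:
  assumes "diagram F X circ" shows "finite (enh_states X circ)"
proof -
  have eq: "enh_states X circ = Sigma (states X) (\<lambda>s. {l. \<forall>C. C \<notin> circ s \<longrightarrow> \<not> l C})"
    by (auto simp: enh_states_def)
  have "finite X" using assms by (simp add: diagram_def)
  then show ?thesis unfolding eq using assms
    by (intro finite_SigmaI finite_states finite_labels) (auto simp: diagram_def)
qed

lemma A_eq:
  assumes "p \<in> X"
  shows "enh_states (X - {p}) (smoothinf p circ) = {S \<in> enh_states X circ. \<not> fst S p}"
proof -
  have *: "\<not> fst S p \<Longrightarrow> (fst S)(p := False) = fst S" for S :: "'a enh" by (simp add: fun_upd_idem)
  show ?thesis
    by (auto simp: mem_enh states_def smoothinf_def * ) (auto simp: fun_upd_idem)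
qed


lemma A_sub: "p \<in> X \<Longrightarrow> enh_states (X - {p}) (smoothinf p circ) \<subseteq> enh_states X circ"
  using A_eq by blast

lemma A0_gam:
  assumes "p \<in> X" "T \<in> enh_states (X - {p}) (smooth0 p circ)"
  shows "gam p T \<in> enh_states X circ" "fst (gam p T) p" "beta0 p (gam p T) = T" "\<not> fst T p"
  using assms by (auto simp: mem_enh gam_def states_def smooth0_def beta0_def fun_upd_idem)

lemma B_beta:
  assumes "p \<in> X" "S \<in> enh_states X circ" "fst S p"
  shows "beta0 p S \<in> enh_states (X - {p}) (smooth0 p circ)" "gam p (beta0 p S) = S"
  using assms by (auto simp: mem_enh gam_def states_def smooth0_def beta0_def fun_upd_idem)

lemma alpha_pt:
  assumes "diagram F X circ" "p \<in> X"
  shows "alpha_map X circ p x T = (if T \<in> enh_states (X - {p}) (smoothinf p circ)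
           then (-1) ^ t_pre (X - {p}) p T * x T else 0)"
proof -
  let ?A = "enh_states (X - {p}) (smoothinf p circ)"
  have fin: "finite ?A" using finite_enh[OF assms(1)] A_sub[OF assms(2)] finite_subset by blast
  have "alpha_map X circ p x T = (\<Sum>S\<in>?A. if S = T then (-1) ^ t_pre (X - {p}) p S * x S else 0)"
    unfolding alpha_map_def lin_ext_def
    by (rule sum.cong) (auto simp: mem_enh states_def alpha0_def fun_upd_idem)
  also have "\<dots> = (if T \<in> ?A then (-1) ^ t_pre (X - {p}) p T * x T else 0)"
    by (rule sum.delta[OF fin])
  finally show ?thesis .
qed

lemma beta_pt:
  assumes "diagram F X circ" "p \<in> X"
  shows "beta_map X circ p y T = (if T \<in> enh_states (X - {p}) (smooth0 p circ)
           then y (gam p T) else 0)"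
proof -
  let ?A0 = "enh_states (X - {p}) (smooth0 p circ)"
  let ?B = "{S\<in>enh_states X circ. fst S p}"
  have fin: "finite ?B" using finite_enh[OF assms(1)] by simp
  have "beta_map X circ p y T = (\<Sum>S\<in>?B. if S = gam p T then (if T \<in> ?A0 then y S else 0) else 0)"
    unfolding beta_map_def lin_ext_def
  proof (rule sum.cong)
    fix S assume S: "S \<in> ?B"
    have "beta0 p S = T \<longleftrightarrow> (T \<in> ?A0 \<and> S = gam p T)"
      using S B_beta[OF assms(2)] A0_gam[OF assms(2)] by (metis (no_types, lifting) mem_Collect_eq)
    then show "(if beta0 p S = T then 1 * y S else 0) =
      (if S = gam p T then (if T \<in> ?A0 then y S else 0) else 0)" by auto
  qed simp
  also have "\<dots> = (if gam p T \<in> ?B then (if T \<in> ?A0 then y (gam p T) else 0) else 0)"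
    by (rule sum.delta[OF fin])
  also have "\<dots> = (if T \<in> ?A0 then y (gam p T) else 0)"
    using A0_gam(1,2)[OF assms(2), where T=T and circ=circ] by auto
  finally show ?thesis .
qed

lemma I_alpha:
  assumes "finite X" "p \<in> X" "\<not> fst S p"
  shows "I_idx X S = I_idx (X - {p}) S - 1"
proof -
  have 1: "{x\<in>X. fst S x} = {x\<in>X - {p}. fst S x}" using assms by auto
  have 2: "{x\<in>X. \<not> fst S x} = insert p {x\<in>X - {p}. \<not> fst S x}" using assms by auto
  show ?thesis unfolding I_idx_def 1 2 using assms(1) by (subst card_insert_disjoint) auto
qed

lemma I_gam:
  assumes "finite X" "p \<in> X"
  shows "I_idx X (gam p R) = I_idx (X - {p}) R + 1"
proof -
  have 1: "{x\<in>X. fst (gam p R) x} = insert p {x\<in>X - {p}. fst R x}" using assms by (auto simp: gam_def)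
  have 2: "{x\<in>X. \<not> fst (gam p R) x} = {x\<in>X - {p}. \<not> fst R x}" using assms by (auto simp: gam_def)
  show ?thesis unfolding I_idx_def 1 2 using assms(1) by (subst card_insert_disjoint) auto
qed

lemma tau_alpha: "\<not> fst S p \<Longrightarrow> tau F (smoothinf p circ) S = tau F circ S"
  by (simp add: tau_def smoothinf_def fun_upd_idem)
lemma Psi_alpha: "\<not> fst S p \<Longrightarrow> Psi F (smoothinf p circ) S = Psi F circ S"
proof -
  assume "\<not> fst S p"
  then have "(fst S)(p := False) = fst S" by (simp add: fun_upd_idem)
  then show ?thesis unfolding Psi_def smoothinf_def by metis
qed
lemma tau_gam: "tau F circ (gam p R) = tau F (smooth0 p circ) R"
  by (simp add: tau_def smooth0_def gam_def)
lemma Psi_gam: "Psi F circ (gam p R) = Psi F (smooth0 p circ) R"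
  unfolding Psi_def smooth0_def gam_def fst_conv snd_conv ..

lemma J_alpha:
  assumes "finite X" "p \<in> X" "\<not> fst S p"
  shows "J_idx F X circ S = J_idx F (X - {p}) (smoothinf p circ) S - 1"
  using I_alpha[OF assms] tau_alpha[OF assms(3)] by (simp add: J_idx_def)

lemma J_gam:
  assumes "finite X" "p \<in> X"
  shows "J_idx F X circ (gam p R) = J_idx F (X - {p}) (smooth0 p circ) R + 1"
  unfolding J_idx_def I_gam[OF assms] tau_gam by simp


lemma S1:
  assumes "finite X" "p \<in> X" "\<not> fst S p"
  shows "t_cnt X S v = t_cnt (X - {p}) S v + (if v < p then 1 else 0)"
proof (cases "v < p")
  case True
  have "{x\<in>X. v < x \<and> \<not> fst S x} = insert p {x\<in>X - {p}. v < x \<and> \<not> fst S x}"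
    using assms True by auto
  then show ?thesis unfolding t_cnt_def using True assms(1) by (simp add: card_insert_disjoint)
next
  case False
  have "{x\<in>X. v < x \<and> \<not> fst S x} = {x\<in>X - {p}. v < x \<and> \<not> fst S x}"
    using assms False by auto
  then show ?thesis unfolding t_cnt_def using False by simp
qed

lemma S2:
  assumes "finite X" "v \<in> X - {p}" "fst S v" "\<not> fst T v" "\<forall>x. x \<noteq> v \<longrightarrow> fst S x = fst T x"
  shows "t_pre (X - {p}) p T = t_pre (X - {p}) p S + (if v < p then 1 else 0)"
proof (cases "v < p")
  case True
  have "{x\<in>X - {p}. x < p \<and> \<not> fst T x} = insert v {x\<in>X - {p}. x < p \<and> \<not> fst S x}"
    using assms True by auto
  then show ?thesis unfolding t_pre_def using True assms by (simp add: card_insert_disjoint)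
next
  case False
  have "{x\<in>X - {p}. x < p \<and> \<not> fst T x} = {x\<in>X - {p}. x < p \<and> \<not> fst S x}"
    using assms False by auto
  then show ?thesis unfolding t_pre_def using False by simp
qed

lemma S3: "t_cnt X (gam p R) v = t_cnt (X - {p}) R v"
proof -
  have "{x\<in>X. v < x \<and> \<not> fst (gam p R) x} = {x\<in>X - {p}. v < x \<and> \<not> fst R x}"
    by (auto simp: gam_def)
  then show ?thesis unfolding t_cnt_def by simp
qed

lemma I1:
  assumes "finite X" "p \<in> X" "\<not> fst S p" "\<not> fst T p" "v \<noteq> p"
  shows "incid F X circ v S T = incid F (X - {p}) (smoothinf p circ) v S T"
proof -
  have c: "circ (fst S) = smoothinf p circ (fst S)" "circ (fst T) = smoothinf p circ (fst T)"
    using assms(3,4) by (simp_all add: smoothinf_def fun_upd_idem)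
  have j: "(J_idx F X circ S = J_idx F X circ T) = (J_idx F (X - {p}) (smoothinf p circ) S = J_idx F (X - {p}) (smoothinf p circ) T)"
    using J_alpha[OF assms(1,2,3)] J_alpha[OF assms(1,2,4)] by simp
  have ps: "Psi F circ S = Psi F (smoothinf p circ) S" "Psi F circ T = Psi F (smoothinf p circ) T"
    using Psi_alpha assms(3,4) by metis+
  have x: "(v \<in> X) = (v \<in> X - {p})" using assms by auto
  show ?thesis unfolding incid_def c j ps x ..
qed

lemma I2: "\<not> fst S p \<Longrightarrow> incid F X circ p S T = 0"
  by (simp add: incid_def)

lemma I3: "\<not> fst S p \<Longrightarrow> fst T p \<Longrightarrow> incid F X circ v S T = 0"
  by (auto simp: incid_def)

lemma I5: "\<not> fst S p \<Longrightarrow> incid F X circ v S (gam p T) = 0"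
  by (auto simp: incid_def gam_def)

lemma I4:
  assumes "finite X" "p \<in> X" "\<not> fst R p" "\<not> fst T p" "v \<noteq> p"
  shows "incid F X circ v (gam p R) (gam p T) = incid F (X - {p}) (smooth0 p circ) v R T"
proof -
  have c: "circ (fst (gam p R)) = smooth0 p circ (fst R)" "circ (fst (gam p T)) = smooth0 p circ (fst T)"
    by (simp_all add: smooth0_def gam_def)
  have j: "(J_idx F X circ (gam p R) = J_idx F X circ (gam p T)) = (J_idx F (X - {p}) (smooth0 p circ) R = J_idx F (X - {p}) (smooth0 p circ) T)"
    unfolding J_gam[OF assms(1,2)] by simp
  have ps: "Psi F circ (gam p R) = Psi F (smooth0 p circ) R" "Psi F circ (gam p T) = Psi F (smooth0 p circ) T"
    using Psi_gam by metis+
  have x: "(v \<in> X) = (v \<in> X - {p})" using assms by auto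
  have f: "fst (gam p R) v = fst R v" "fst (gam p T) v = fst T v" using assms by (auto simp: gam_def)
  have a: "(\<forall>x. x \<noteq> v \<longrightarrow> fst (gam p R) x = fst (gam p T) x) = (\<forall>x. x \<noteq> v \<longrightarrow> fst R x = fst T x)"
    using assms by (auto simp: gam_def)
  have l: "snd (gam p R) = snd R" "snd (gam p T) = snd T" by (simp_all add: gam_def)
  show ?thesis unfolding incid_def c j ps x f a l ..
qed


lemma I6: "incid F X circ p S (gam p T) = 0"
  by (simp add: incid_def gam_def)

lemma alpha_term:
  assumes "finite X" "p \<in> X" "\<not> fst S p" "\<not> fst T p" "v \<in> X - {p}"
  shows "(-1::int) ^ t_pre (X - {p}) p T * ((-1) ^ t_cnt (X - {p}) S v * incid F (X - {p}) (smoothinf p circ) v S T)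
       = (-1) ^ t_pre (X - {p}) p S * ((-1) ^ t_cnt X S v * incid F X circ v S T)"
proof -
  have e: "incid F (X - {p}) (smoothinf p circ) v S T = incid F X circ v S T"
    using I1[OF assms(1-4)] assms(5) by simp
  show ?thesis
  proof (cases "incid F X circ v S T = 0")
    case True then show ?thesis unfolding e by simp
  next
    case False
    then have c: "fst S v" "\<not> fst T v" "\<forall>x. x \<noteq> v \<longrightarrow> fst S x = fst T x"
      by (auto simp: incid_def split: if_splits)
    have s1: "t_cnt X S v = t_cnt (X - {p}) S v + (if v < p then 1 else 0)"
      by (rule S1[OF assms(1-3)])
    have s2: "t_pre (X - {p}) p T = t_pre (X - {p}) p S + (if v < p then 1 else 0)"
      by (rule S2[OF assms(1) assms(5) c])
    show ?thesis unfolding e s1 s2 by (simp add: power_add)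
  qed
qed

lemma alpha_chain:
  assumes D: "diagram F X circ" and pX: "p \<in> X"
  shows "alpha_map X circ p (diff F (X - {p}) (smoothinf p circ) x) T
       = diff F X circ (alpha_map X circ p x) T"
proof -
  let ?A = "enh_states (X - {p}) (smoothinf p circ)"
  let ?E = "enh_states X circ"
  let ?c = "smoothinf p circ"
  have finX: "finite X" using D by (simp add: diagram_def)
  have finE: "finite ?E" by (rule finite_enh[OF D])
  have AE: "?A = {S \<in> ?E. \<not> fst S p}" by (rule A_eq[OF pX])
  have AsE: "?A \<subseteq> ?E" using AE by blast
  show ?thesis
  proof (cases "T \<in> ?E")
    case False
    then have "T \<notin> ?A" using AsE by blast
    then show ?thesis using False by (simp add: alpha_pt[OF D pX] diff_def)
  next
    case TE: True
    show ?thesis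
    proof (cases "T \<in> ?A")
      case False
      then have Tp: "fst T p" using AE TE by blast
      have "diff F X circ (alpha_map X circ p x) T = 0"
        unfolding diff_def using TE
      proof (simp, intro sum.neutral ballI)
        fix S assume "S \<in> ?E"
        show "alpha_map X circ p x S * (\<Sum>v\<in>X. (-1) ^ t_cnt X S v * incid F X circ v S T) = 0"
        proof (cases "S \<in> ?A")
          case True
          then have "\<not> fst S p" using AE by blast
          then show ?thesis using I3[OF _ Tp] by simp
        qed (simp add: alpha_pt[OF D pX])
      qed
      then show ?thesis using False by (simp add: alpha_pt[OF D pX])
    next
      case TA: True
      then have Tp: "\<not> fst T p" using AE by blast
      have "diff F X circ (alpha_map X circ p x) T
          = (\<Sum>S\<in>?E. alpha_map X circ p x S * (\<Sum>v\<in>X. (-1) ^ t_cnt X S v * incid F X circ v S T))"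
        using TE by (simp add: diff_def)
      also have "\<dots> = (\<Sum>S\<in>?A. ((-1) ^ t_pre (X - {p}) p S * x S) * (\<Sum>v\<in>X. (-1) ^ t_cnt X S v * incid F X circ v S T))"
        by (rule sum.mono_neutral_cong_right[OF finE AsE]) (auto simp: alpha_pt[OF D pX])
      also have "\<dots> = (\<Sum>S\<in>?A. x S * (\<Sum>v\<in>X - {p}. (-1) ^ t_pre (X - {p}) p S * ((-1) ^ t_cnt X S v * incid F X circ v S T)))"
      proof (rule sum.cong[OF refl])
        fix S assume SA: "S \<in> ?A"
        then have Sp: "\<not> fst S p" using AE by blast
        have "(\<Sum>v\<in>X. (-1::int) ^ t_cnt X S v * incid F X circ v S T)
            = (-1) ^ t_cnt X S p * incid F X circ p S T + (\<Sum>v\<in>X - {p}. (-1) ^ t_cnt X S v * incid F X circ v S T)"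
          by (rule sum.remove[OF finX pX])
        also have "\<dots> = (\<Sum>v\<in>X - {p}. (-1) ^ t_cnt X S v * incid F X circ v S T)"
          using I2[OF Sp] by simp
        finally show "((-1) ^ t_pre (X - {p}) p S * x S) * (\<Sum>v\<in>X. (-1) ^ t_cnt X S v * incid F X circ v S T)
            = x S * (\<Sum>v\<in>X - {p}. (-1) ^ t_pre (X - {p}) p S * ((-1) ^ t_cnt X S v * incid F X circ v S T))"
          by (simp add: sum_distrib_left algebra_simps)
      qed
      also have "\<dots> = (\<Sum>S\<in>?A. x S * (\<Sum>v\<in>X - {p}. (-1) ^ t_pre (X - {p}) p T * ((-1) ^ t_cnt (X - {p}) S v * incid F (X - {p}) ?c v S T)))"
      proof (rule sum.cong[OF refl])
        fix S assume SA: "S \<in> ?A"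
        then have Sp: "\<not> fst S p" using AE by blast
        show "x S * (\<Sum>v\<in>X - {p}. (-1) ^ t_pre (X - {p}) p S * ((-1) ^ t_cnt X S v * incid F X circ v S T))
            = x S * (\<Sum>v\<in>X - {p}. (-1) ^ t_pre (X - {p}) p T * ((-1) ^ t_cnt (X - {p}) S v * incid F (X - {p}) ?c v S T))"
          using alpha_term[OF finX pX Sp Tp] by simp
      qed
      also have "\<dots> = (-1) ^ t_pre (X - {p}) p T * (\<Sum>S\<in>?A. x S * (\<Sum>v\<in>X - {p}. (-1) ^ t_cnt (X - {p}) S v * incid F (X - {p}) ?c v S T))"
        by (simp add: sum_distrib_left algebra_simps)
      also have "\<dots> = alpha_map X circ p (diff F (X - {p}) ?c x) T"
        using TA by (simp add: alpha_pt[OF D pX] diff_def)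
      finally show ?thesis by simp
    qed
  qed
qed


lemma beta_chain:
  assumes D: "diagram F X circ" and pX: "p \<in> X"
  shows "beta_map X circ p (diff F X circ y) T
       = diff F (X - {p}) (smooth0 p circ) (beta_map X circ p y) T"
proof -
  let ?A0 = "enh_states (X - {p}) (smooth0 p circ)"
  let ?E = "enh_states X circ"
  let ?B = "{S \<in> ?E. fst S p}"
  let ?c = "smooth0 p circ"
  have finX: "finite X" using D by (simp add: diagram_def)
  have finE: "finite ?E" by (rule finite_enh[OF D])
  show ?thesis
  proof (cases "T \<in> ?A0")
    case False
    then show ?thesis by (simp add: beta_pt[OF D pX] diff_def)
  next
    case TA: True
    have Tp: "\<not> fst T p" using A0_gam(4)[OF pX TA] .
    have gT: "gam p T \<in> ?E" using A0_gam(1)[OF pX TA] .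
    have Beq: "?B = gam p ` ?A0"
    proof
      show "?B \<subseteq> gam p ` ?A0"
      proof
        fix S assume "S \<in> ?B"
        then have "S = gam p (beta0 p S)" "beta0 p S \<in> ?A0" using B_beta[OF pX, where S=S and circ=circ] by auto
        then show "S \<in> gam p ` ?A0" by blast
      qed
      show "gam p ` ?A0 \<subseteq> ?B" using A0_gam(1,2)[OF pX] by blast
    qed
    have inj: "inj_on (gam p) ?A0"
      by (rule inj_on_inverseI[where g = "beta0 p"]) (rule A0_gam(3)[OF pX])
    have "beta_map X circ p (diff F X circ y) T
        = (\<Sum>S\<in>?E. y S * (\<Sum>v\<in>X. (-1) ^ t_cnt X S v * incid F X circ v S (gam p T)))"
      using TA gT by (simp add: beta_pt[OF D pX] diff_def)
    also have "\<dots> = (\<Sum>S\<in>?B. y S * (\<Sum>v\<in>X. (-1) ^ t_cnt X S v * incid F X circ v S (gam p T)))"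
      by (rule sum.mono_neutral_cong_right[OF finE]) (auto simp: I5)
    also have "\<dots> = (\<Sum>R\<in>?A0. y (gam p R) * (\<Sum>v\<in>X. (-1) ^ t_cnt X (gam p R) v * incid F X circ v (gam p R) (gam p T)))"
      unfolding Beq by (simp add: sum.reindex[OF inj])
    also have "\<dots> = (\<Sum>R\<in>?A0. beta_map X circ p y R * (\<Sum>v\<in>X - {p}. (-1) ^ t_cnt (X - {p}) R v * incid F (X - {p}) ?c v R T))"
    proof (rule sum.cong[OF refl])
      fix R assume RA: "R \<in> ?A0"
      have Rp: "\<not> fst R p" using A0_gam(4)[OF pX RA] .
      have "(\<Sum>v\<in>X. (-1::int) ^ t_cnt X (gam p R) v * incid F X circ v (gam p R) (gam p T))
          = (-1) ^ t_cnt X (gam p R) p * incid F X circ p (gam p R) (gam p T) + (\<Sum>v\<in>X - {p}. (-1) ^ t_cnt X (gam p R) v * incid F X circ v (gam p R) (gam p T))"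
        by (rule sum.remove[OF finX pX])
      also have "\<dots> = (\<Sum>v\<in>X - {p}. (-1) ^ t_cnt X (gam p R) v * incid F X circ v (gam p R) (gam p T))"
        by (simp add: I6)
      also have "\<dots> = (\<Sum>v\<in>X - {p}. (-1) ^ t_cnt (X - {p}) R v * incid F (X - {p}) ?c v R T)"
        by (rule sum.cong[OF refl]) (simp add: S3 I4[OF finX pX Rp Tp])
      finally show "y (gam p R) * (\<Sum>v\<in>X. (-1) ^ t_cnt X (gam p R) v * incid F X circ v (gam p R) (gam p T))
          = beta_map X circ p y R * (\<Sum>v\<in>X - {p}. (-1) ^ t_cnt (X - {p}) R v * incid F (X - {p}) ?c v R T)"
        using RA by (simp add: beta_pt[OF D pX])
    qed
    also have "\<dots> = diff F (X - {p}) ?c (beta_map X circ p y) T"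
      using TA by (simp add: diff_def)
    finally show ?thesis .
  qed
qed


theorem theorem7p1:
  fixes F :: "'a topology" and X :: "nat set" and circ :: "(nat \<Rightarrow> bool) \<Rightarrow> 'a set set"
    and p :: nat
  assumes "surface F" and "diagram F X circ" and "p \<in> X"
  defines "X' \<equiv> X - {p}" and "c0 \<equiv> smooth0 p circ" and "cinf \<equiv> smoothinf p circ"
  shows
    "(\<forall>S\<in>enh_states X' cinf. alpha0 p S \<in> enh_states X circ \<and>
        I_idx X (alpha0 p S) = I_idx X' S - 1 \<and>
        J_idx F X circ (alpha0 p S) = J_idx F X' cinf S - 1 \<and>
        Psi F circ (alpha0 p S) = Psi F cinf S)
   \<and> (\<forall>S\<in>enh_states X circ. fst S p \<longrightarrow> beta0 p S \<in> enh_states X' c0 \<and>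
        I_idx X' (beta0 p S) = I_idx X S - 1 \<and>
        J_idx F X' c0 (beta0 p S) = J_idx F X circ S - 1 \<and>
        Psi F c0 (beta0 p S) = Psi F circ S)
   \<and> (\<forall>x. is_chain X' cinf x \<longrightarrow> is_chain X circ (alpha_map X circ p x) \<and>
        alpha_map X circ p (diff F X' cinf x) = diff F X circ (alpha_map X circ p x))
   \<and> (\<forall>y. is_chain X circ y \<longrightarrow> is_chain X' c0 (beta_map X circ p y) \<and>
        beta_map X circ p (diff F X circ y) = diff F X' c0 (beta_map X circ p y))
   \<and> (\<forall>x. is_chain X' cinf x \<longrightarrow> alpha_map X circ p x = (\<lambda>_. 0) \<longrightarrow> x = (\<lambda>_. 0))
   \<and> (\<forall>y. is_chain X circ y \<longrightarrow>
        (beta_map X circ p y = (\<lambda>_. 0) \<longleftrightarrow> (\<exists>x. is_chain X' cinf x \<and> alpha_map X circ p x = y)))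
   \<and> (\<forall>z. is_chain X' c0 z \<longrightarrow> (\<exists>y. is_chain X circ y \<and> beta_map X circ p y = z))"
proof -
  note D = assms(2) and pX = assms(3)
  have finX: "finite X" using D by (simp add: diagram_def)
  have AE: "enh_states X' cinf = {S \<in> enh_states X circ. \<not> fst S p}"
    unfolding X'_def cinf_def by (rule A_eq[OF pX])
  have apt: "\<And>x T. alpha_map X circ p x T = (if T \<in> enh_states X' cinf then (-1) ^ t_pre X' p T * x T else 0)"
    unfolding X'_def cinf_def by (rule alpha_pt[OF D pX])
  have bpt: "\<And>y T. beta_map X circ p y T = (if T \<in> enh_states X' c0 then y (gam p T) else 0)"
    unfolding X'_def c0_def by (rule beta_pt[OF D pX])
  have a0: "\<And>S. S \<in> enh_states X' cinf \<Longrightarrow> alpha0 p S = S"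
    using AE by (auto simp: alpha0_def fun_upd_idem)
  have P1: "\<forall>S\<in>enh_states X' cinf. alpha0 p S \<in> enh_states X circ \<and>
        I_idx X (alpha0 p S) = I_idx X' S - 1 \<and>
        J_idx F X circ (alpha0 p S) = J_idx F X' cinf S - 1 \<and>
        Psi F circ (alpha0 p S) = Psi F cinf S"
  proof
    fix S assume SA: "S \<in> enh_states X' cinf"
    then have Sp: "\<not> fst S p" "S \<in> enh_states X circ" using AE by auto
    show "alpha0 p S \<in> enh_states X circ \<and>
        I_idx X (alpha0 p S) = I_idx X' S - 1 \<and>
        J_idx F X circ (alpha0 p S) = J_idx F X' cinf S - 1 \<and>
        Psi F circ (alpha0 p S) = Psi F cinf S"
      unfolding a0[OF SA] X'_def cinf_def
      using Sp I_alpha[OF finX pX Sp(1)] J_alpha[OF finX pX Sp(1)] Psi_alpha[OF Sp(1)] by simp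
  qed
  have P2: "\<forall>S\<in>enh_states X circ. fst S p \<longrightarrow> beta0 p S \<in> enh_states X' c0 \<and>
        I_idx X' (beta0 p S) = I_idx X S - 1 \<and>
        J_idx F X' c0 (beta0 p S) = J_idx F X circ S - 1 \<and>
        Psi F c0 (beta0 p S) = Psi F circ S"
  proof (intro ballI impI)
    fix S assume SE: "S \<in> enh_states X circ" and Sp: "fst S p"
    have b: "beta0 p S \<in> enh_states X' c0" and g: "gam p (beta0 p S) = S"
      using B_beta[OF pX SE Sp] unfolding X'_def c0_def by auto
    have i: "I_idx X S = I_idx X' (beta0 p S) + 1"
      using I_gam[OF finX pX, of "beta0 p S"] unfolding g X'_def .
    have j: "J_idx F X circ S = J_idx F X' c0 (beta0 p S) + 1"
      using J_gam[OF finX pX, of F circ "beta0 p S"] unfolding g X'_def c0_def .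
    have ps: "Psi F circ S = Psi F c0 (beta0 p S)"
      using Psi_gam[of F circ p "beta0 p S"] unfolding g c0_def .
    show "beta0 p S \<in> enh_states X' c0 \<and>
        I_idx X' (beta0 p S) = I_idx X S - 1 \<and>
        J_idx F X' c0 (beta0 p S) = J_idx F X circ S - 1 \<and>
        Psi F c0 (beta0 p S) = Psi F circ S"
      using b i j ps by simp
  qed
  have P3: "\<forall>x. is_chain X' cinf x \<longrightarrow> is_chain X circ (alpha_map X circ p x) \<and>
        alpha_map X circ p (diff F X' cinf x) = diff F X circ (alpha_map X circ p x)"
  proof (intro allI impI conjI)
    fix x
    show "is_chain X circ (alpha_map X circ p x)"
      unfolding is_chain_def using AE by (auto simp: apt)
    show "alpha_map X circ p (diff F X' cinf x) = diff F X circ (alpha_map X circ p x)"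
      unfolding X'_def cinf_def using alpha_chain[OF D pX] by blast
  qed
  have P4: "\<forall>y. is_chain X circ y \<longrightarrow> is_chain X' c0 (beta_map X circ p y) \<and>
        beta_map X circ p (diff F X circ y) = diff F X' c0 (beta_map X circ p y)"
  proof (intro allI impI conjI)
    fix y
    show "is_chain X' c0 (beta_map X circ p y)"
      unfolding is_chain_def by (auto simp: bpt)
    show "beta_map X circ p (diff F X circ y) = diff F X' c0 (beta_map X circ p y)"
      unfolding X'_def c0_def using beta_chain[OF D pX] by blast
  qed
  have P5: "\<forall>x. is_chain X' cinf x \<longrightarrow> alpha_map X circ p x = (\<lambda>_. 0) \<longrightarrow> x = (\<lambda>_. 0)"
  proof (intro allI impI)
    fix x assume ch: "is_chain X' cinf x" and z: "alpha_map X circ p x = (\<lambda>_. 0)"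
    show "x = (\<lambda>_. 0)"
    proof
      fix T
      show "x T = 0"
      proof (cases "T \<in> enh_states X' cinf")
        case True
        have "alpha_map X circ p x T = 0" using z by simp
        then show ?thesis using True by (simp add: apt)
      next
        case False then show ?thesis using ch unfolding is_chain_def by blast
      qed
    qed
  qed
  have P6: "\<forall>y. is_chain X circ y \<longrightarrow>
        (beta_map X circ p y = (\<lambda>_. 0) \<longleftrightarrow> (\<exists>x. is_chain X' cinf x \<and> alpha_map X circ p x = y))"
  proof (intro allI impI iffI)
    fix y assume ch: "is_chain X circ y" and z: "beta_map X circ p y = (\<lambda>_. 0)"
    define x where "x = (\<lambda>T. if T \<in> enh_states X' cinf then (-1) ^ t_pre X' p T * y T else (0::int))"
    have "is_chain X' cinf x" unfolding is_chain_def x_def by simp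
    moreover have "alpha_map X circ p x = y"
    proof
      fix T
      show "alpha_map X circ p x T = y T"
      proof (cases "T \<in> enh_states X' cinf")
        case True
        have "(-1::int) ^ t_pre X' p T * (-1) ^ t_pre X' p T = 1"
          by (simp flip: power_add)
        then show ?thesis using True by (simp add: apt x_def mult.assoc[symmetric])
      next
        case False
        have "y T = 0"
        proof (cases "T \<in> enh_states X circ")
          case True
          then have Tp: "fst T p" using False AE by blast
          have b: "beta0 p T \<in> enh_states X' c0" and g: "gam p (beta0 p T) = T"
            using B_beta[OF pX True Tp] unfolding X'_def c0_def by auto
          have "beta_map X circ p y (beta0 p T) = 0" using z by simp
          then show ?thesis using b g by (simp add: bpt)
        next
          case False then show ?thesis using ch unfolding is_chain_def by blast
        qed
        then show ?thesis using False by (simp add: apt)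
      qed
    qed
    ultimately show "\<exists>x. is_chain X' cinf x \<and> alpha_map X circ p x = y" by blast
  next
    fix y assume "\<exists>x. is_chain X' cinf x \<and> alpha_map X circ p x = y"
    then obtain x where y: "y = alpha_map X circ p x" by blast
    show "beta_map X circ p y = (\<lambda>_. 0)"
    proof
      fix T
      have "gam p T \<notin> enh_states X' cinf" using AE by (auto simp: gam_def)
      then show "beta_map X circ p y T = 0" unfolding y by (simp add: bpt apt)
    qed
  qed
  have P7: "\<forall>z. is_chain X' c0 z \<longrightarrow> (\<exists>y. is_chain X circ y \<and> beta_map X circ p y = z)"
  proof (intro allI impI)
    fix z assume ch: "is_chain X' c0 z"
    define y where "y = (\<lambda>S. if S \<in> enh_states X circ \<and> fst S p then z (beta0 p S) else (0::int))"
    have "is_chain X circ y" unfolding is_chain_def y_def by simp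
    moreover have "beta_map X circ p y = z"
    proof
      fix T
      show "beta_map X circ p y T = z T"
      proof (cases "T \<in> enh_states X' c0")
        case True
        then have "gam p T \<in> enh_states X circ" "fst (gam p T) p" "beta0 p (gam p T) = T"
          using A0_gam[OF pX, where T=T and circ=circ] unfolding X'_def c0_def by auto
        then show ?thesis using True by (simp add: bpt y_def)
      next
        case False
        then have "z T = 0" using ch unfolding is_chain_def by blast
        then show ?thesis using False by (simp add: bpt)
      qed
    qed
    ultimately show "\<exists>y. is_chain X circ y \<and> beta_map X circ p y = z" by blast
  qed
  show ?thesis using P1 P2 P3 P4 P5 P6 P7 by blast
qed

end
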